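(* For every digraph $D$ and every integer $k$ with $2\le k\le |V(D)|$, we have $\kappa_k(D)\le\delta^+(D)$ and $\kappa_k(D)\le\delta^-(D)$.
   Context: Digraphs are finite, without loops and without parallel arcs. $\delta^+(D)$ and $\delta^-(D)$ denote the minimum out-degree and minimum in-degree of $D$. A digraph is strong if for every ordered pair of vertices $u,v$ there is a directed path from $u$ to $v$; a one-vertex digraph is strong. For $S\subseteq V(D)$, strong subgraphs $D_1,\dots,D_p$ of $D$ each containing $S$ are $S$-internally disjoint if $V(D_i)\cap V(D_j)=S$ and $A(D_i)\cap A(D_j)=\emptyset$ for all $i<j$. $\kappa_S(D)$ is the maximum number of $S$-internally disjoint strong subgraphs containing $S$, and $\kappa_k(D)=\min\{\kappa_S(D): S\subseteq V(D),\ |S|=k\}$. *)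

theory Defs
  imports Main
begin

text \<open>A digraph is given by a finite vertex set V and an arc set A \<subseteq> V \<times> V without loops
  (arcs as pairs, so there are no parallel arcs).\<close>
definition digraph :: "'a set \<Rightarrow> ('a \<times> 'a) set \<Rightarrow> bool" where
  "digraph V A \<longleftrightarrow> finite V \<and> A \<subseteq> V \<times> V \<and> (\<forall>v. (v, v) \<notin> A)"

definition out_degree :: "('a \<times> 'a) set \<Rightarrow> 'a \<Rightarrow> nat" where
  "out_degree A v = card {w. (v, w) \<in> A}"

definition in_degree :: "('a \<times> 'a) set \<Rightarrow> 'a \<Rightarrow> nat" where
  "in_degree A v = card {u. (u, v) \<in> A}"

definition min_out_degree :: "'a set \<Rightarrow> ('a \<times> 'a) set \<Rightarrow> nat" where
  "min_out_degree V A = Min (out_degree A ` V)"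

definition min_in_degree :: "'a set \<Rightarrow> ('a \<times> 'a) set \<Rightarrow> nat" where
  "min_in_degree V A = Min (in_degree A ` V)"

definition subgraph :: "'a set \<Rightarrow> ('a \<times> 'a) set \<Rightarrow> 'a set \<Rightarrow> ('a \<times> 'a) set \<Rightarrow> bool" where
  "subgraph H B V A \<longleftrightarrow> H \<subseteq> V \<and> B \<subseteq> A \<and> B \<subseteq> H \<times> H"

definition strong :: "'a set \<Rightarrow> ('a \<times> 'a) set \<Rightarrow> bool" where
  "strong H B \<longleftrightarrow> (\<forall>u\<in>H. \<forall>v\<in>H. (u, v) \<in> B\<^sup>*)"

definition S_disjoint_family ::
  "'a set \<Rightarrow> ('a \<times> 'a) set \<Rightarrow> 'a set \<Rightarrow> nat \<Rightarrow> (nat \<Rightarrow> 'a set) \<Rightarrow> (nat \<Rightarrow> ('a \<times> 'a) set) \<Rightarrow> bool" where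
  "S_disjoint_family V A S p Vs As \<longleftrightarrow>
     (\<forall>i<p. subgraph (Vs i) (As i) V A \<and> strong (Vs i) (As i) \<and> S \<subseteq> Vs i) \<and>
     (\<forall>i<p. \<forall>j<p. i \<noteq> j \<longrightarrow> Vs i \<inter> Vs j = S \<and> As i \<inter> As j = {})"

definition kappa_S :: "'a set \<Rightarrow> ('a \<times> 'a) set \<Rightarrow> 'a set \<Rightarrow> nat" where
  "kappa_S V A S = Max {p. \<exists>Vs As. S_disjoint_family V A S p Vs As}"

definition kappa_k :: "'a set \<Rightarrow> ('a \<times> 'a) set \<Rightarrow> nat \<Rightarrow> nat" where
  "kappa_k V A k = Min {kappa_S V A S | S. S \<subseteq> V \<and> card S = k}"

end

theory Submission
  imports Defs
begin

lemma fam_out: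
  assumes d: "digraph V A" and F: "S_disjoint_family V A S p Vs As"
    and v: "v \<in> S" and w: "w \<in> S" and vw: "v \<noteq> w"
  shows "p \<le> out_degree A v"
proof -
  have ex: "\<exists>x. (v, x) \<in> As i" if "i < p" for i
  proof -
    from F that have "strong (Vs i) (As i)" "S \<subseteq> Vs i"
      unfolding S_disjoint_family_def by auto
    with v w have "(v, w) \<in> (As i)\<^sup>*" unfolding strong_def by auto
    with vw show ?thesis by (metis converse_rtranclE)
  qed
  define f where "f i = (SOME x. (v, x) \<in> As i)" for i
  have fi: "(v, f i) \<in> As i" if "i < p" for i
    using ex[OF that] unfolding f_def by (rule someI_ex)
  have "inj_on f {..<p}"
  proof (rule inj_onI)
    fix i j assume "i \<in> {..<p}" "j \<in> {..<p}" "f i = f j"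
    then show "i = j" using fi F unfolding S_disjoint_family_def by force
  qed
  moreover have "f ` {..<p} \<subseteq> {x. (v, x) \<in> A}"
    using fi F unfolding S_disjoint_family_def subgraph_def by force
  moreover have "finite {x. (v, x) \<in> A}"
  proof -
    have "{x. (v, x) \<in> A} \<subseteq> snd ` A" by force
    moreover have "finite A" using d unfolding digraph_def
      by (meson finite_SigmaI finite_subset)
    ultimately show ?thesis by (meson finite_imageI finite_subset)
  qed
  ultimately have "card {..<p} \<le> out_degree A v"
    unfolding out_degree_def by (meson card_inj_on_le)
  then show ?thesis by simp
qed

lemma fam_in:
  assumes d: "digraph V A" and F: "S_disjoint_family V A S p Vs As"
    and v: "v \<in> S" and w: "w \<in> S" and vw: "v \<noteq> w"
  shows "p \<le> in_degree A v"
proof -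
  have ex: "\<exists>x. (x, v) \<in> As i" if "i < p" for i
  proof -
    from F that have "strong (Vs i) (As i)" "S \<subseteq> Vs i"
      unfolding S_disjoint_family_def by auto
    with v w have "(w, v) \<in> (As i)\<^sup>*" unfolding strong_def by auto
    with vw show ?thesis by (metis rtranclE)
  qed
  define f where "f i = (SOME x. (x, v) \<in> As i)" for i
  have fi: "(f i, v) \<in> As i" if "i < p" for i
    using ex[OF that] unfolding f_def by (rule someI_ex)
  have "inj_on f {..<p}"
  proof (rule inj_onI)
    fix i j assume "i \<in> {..<p}" "j \<in> {..<p}" "f i = f j"
    then show "i = j" using fi F unfolding S_disjoint_family_def by force
  qed
  moreover have "f ` {..<p} \<subseteq> {x. (x, v) \<in> A}"
    using fi F unfolding S_disjoint_family_def subgraph_def by force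
  moreover have "finite {x. (x, v) \<in> A}"
  proof -
    have "{x. (x, v) \<in> A} \<subseteq> fst ` A" by force
    moreover have "finite A" using d unfolding digraph_def
      by (meson finite_SigmaI finite_subset)
    ultimately show ?thesis by (meson finite_imageI finite_subset)
  qed
  ultimately have "card {..<p} \<le> in_degree A v"
    unfolding in_degree_def by (meson card_inj_on_le)
  then show ?thesis by simp
qed

lemma kS_le:
  assumes "\<And>p Vs As. S_disjoint_family V A S p Vs As \<Longrightarrow> p \<le> d"
  shows "kappa_S V A S \<le> d"
proof -
  let ?P = "{p. \<exists>Vs As. S_disjoint_family V A S p Vs As}"
  have "?P \<subseteq> {..d}" using assms by auto
  hence fin: "finite ?P" by (rule finite_subset) simp
  have "0 \<in> ?P" unfolding S_disjoint_family_def by auto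
  hence "?P \<noteq> {}" by auto
  thus ?thesis unfolding kappa_S_def using fin assms by (subst Max_le_iff) auto
qed

lemma pick_S:
  assumes d: "digraph V A" and k: "2 \<le> k" "k \<le> card V" and v: "v \<in> V"
  shows "\<exists>S w. S \<subseteq> V \<and> card S = k \<and> v \<in> S \<and> w \<in> S \<and> w \<noteq> v"
proof -
  have fin: "finite V" using d unfolding digraph_def by auto
  have "k - 1 \<le> card (V - {v})" using k v fin by simp
  then obtain T where T: "T \<subseteq> V - {v}" "card T = k - 1"
    by (meson obtain_subset_with_card_n)
  have finT: "finite T" using T fin by (meson finite_Diff finite_subset)
  have "T \<noteq> {}" using T k by auto
  then obtain w where "w \<in> T" by auto
  moreover have "v \<notin> T" using T by auto
  moreover have "card (insert v T) = k" using T finT k \<open>v \<notin> T\<close> by simp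
  ultimately show ?thesis using T v
    by (rule_tac x="insert v T" in exI, rule_tac x=w in exI) auto
qed

lemma kk_le:
  assumes d: "digraph V A" and k: "2 \<le> k" "k \<le> card V" and S: "S \<subseteq> V" "card S = k"
  shows "kappa_k V A k \<le> kappa_S V A S"
proof -
  have fin: "finite V" using d unfolding digraph_def by auto
  have "{kappa_S V A S | S. S \<subseteq> V \<and> card S = k} = (kappa_S V A) ` {S. S \<subseteq> V \<and> card S = k}"
    by auto
  moreover have "finite {S. S \<subseteq> V \<and> card S = k}" using fin by simp
  ultimately have "finite {kappa_S V A S | S. S \<subseteq> V \<and> card S = k}" by simp
  thus ?thesis unfolding kappa_k_def using S by (intro Min_le) auto
qed

theorem lemma3p2:
  fixes V :: "'a set" and A :: "('a \<times> 'a) set" and k :: nat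
  assumes "digraph V A" and "2 \<le> k" and "k \<le> card V"
  shows "kappa_k V A k \<le> min_out_degree V A \<and> kappa_k V A k \<le> min_in_degree V A"
proof -
  have fin: "finite V" using assms(1) unfolding digraph_def by auto
  have ne: "V \<noteq> {}" using assms by auto
  obtain v where v: "v \<in> V" "out_degree A v = min_out_degree V A"
    unfolding min_out_degree_def using fin ne
    by (metis (no_types, lifting) Min_in finite_imageI image_iff image_is_empty)
  obtain u where u: "u \<in> V" "in_degree A u = min_in_degree V A"
    unfolding min_in_degree_def using fin ne
    by (metis (no_types, lifting) Min_in finite_imageI image_iff image_is_empty)
  obtain S w where S: "S \<subseteq> V" "card S = k" "v \<in> S" "w \<in> S" "w \<noteq> v"
    using pick_S[OF assms v(1)] by blast
  obtain S' w' where S': "S' \<subseteq> V" "card S' = k" "u \<in> S'" "w' \<in> S'" "w' \<noteq> u"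
    using pick_S[OF assms u(1)] by blast
  have "kappa_S V A S \<le> out_degree A v"
    by (rule kS_le, rule fam_out[OF assms(1) _ S(3) S(4)]) (use S in auto)
  moreover have "kappa_S V A S' \<le> in_degree A u"
    by (rule kS_le, rule fam_in[OF assms(1) _ S'(3) S'(4)]) (use S' in auto)
  ultimately show ?thesis using kk_le[OF assms S(1,2)] kk_le[OF assms S'(1,2)] v u by linarith
qed

end
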